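(* Let $G$ be an abelian group and $\{a_i\}_{i\ge0}$ an infinite sequence of elements of $G$. If $\{a_i-a_0\mid i\ge1\}$ is linearly independent in $G$, then there exists $N\ge0$ such that $\{a_i\mid i>N\}$ is linearly independent in $G$.
   Context: A family $\{x_i\}$ of elements of an abelian group is linearly independent if $\sum_i c_ix_i=0$ with $c_i\in\mathbb{Z}$, only finitely many nonzero, implies all $c_i=0$. *)

theory Defs
  imports Main
begin

definition zsmult :: "int \<Rightarrow> 'a::ab_group_add \<Rightarrow> 'a" where
  "zsmult k x = (if 0 \<le> k then (((+) x) ^^ nat k) 0 else - ((((+) x) ^^ nat (- k)) 0))"

definition lin_indep_family :: "'i set \<Rightarrow> ('i \<Rightarrow> 'a::ab_group_add) \<Rightarrow> bool" where
  "lin_indep_family I x \<longleftrightarrow>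
     (\<forall>F (c :: 'i \<Rightarrow> int). finite F \<longrightarrow> F \<subseteq> I \<longrightarrow>
        (\<Sum>i\<in>F. zsmult (c i) (x i)) = 0 \<longrightarrow> (\<forall>i\<in>F. c i = 0))"

end

theory Submission
  imports Defs
begin

definition nsm :: "nat \<Rightarrow> 'a::ab_group_add \<Rightarrow> 'a" where
  "nsm n x = (\<Sum>_\<in>{..<n}. x)"

lemma nsm_pow: "(((+) x) ^^ n) 0 = nsm n x"
  by (induction n) (simp_all add: nsm_def add.commute)

lemma nsm_add_left: "nsm (m + n) x = nsm m x + nsm n x"
  by (induction m) (simp_all add: nsm_def add_ac)

lemma nsm_add_right: "nsm n (x + y) = nsm n x + nsm n y"
  by (simp add: nsm_def sum.distrib)

lemma nsm_minus: "nsm n (- x) = - nsm n x"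
  by (simp add: nsm_def sum_negf)

lemma nsm_diff: "nsm n (x - y) = nsm n x - nsm n y"
  by (simp add: nsm_def sum_subtractf)

lemma nsm_Suc: "nsm (Suc m) y = y + nsm m y"
  by (simp add: nsm_def add.commute)

lemma nsm_mult: "nsm (m * n) x = nsm m (nsm n x)"
  by (induction m) (simp_all add: nsm_add_left nsm_Suc, simp add: nsm_def)

lemma zsmult_nsm: "zsmult k x = (if 0 \<le> k then nsm (nat k) x else - nsm (nat (-k)) x)"
  by (simp add: zsmult_def nsm_pow)

lemma zs_repr: "zsmult (int m - int n) x = nsm m x - nsm n x"
proof (cases "n \<le> m")
  case True
  then have e: "int m - int n = int (m - n)" by simp
  have "nsm m x = nsm (m - n) x + nsm n x"
    using True nsm_add_left[of "m-n" n x] by simp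
  then show ?thesis unfolding e zsmult_nsm by simp
next
  case False
  then have e: "int m - int n = - int (n - m)" by simp
  have ne: "\<not> 0 \<le> - int (n - m)" using False by simp
  have "nsm n x = nsm (n - m) x + nsm m x"
    using False nsm_add_left[of "n-m" m x] by simp
  have nn: "nat (- (- int (n - m))) = n - m" by simp
  show ?thesis unfolding e zsmult_nsm using ne nn \<open>nsm n x = _\<close> by simp
qed

lemma int_repr: obtains m n where "k = int m - int n"
proof -
  have "k = int (nat k) - int (nat (- k))" by simp
  then show ?thesis by (rule that)
qed

lemma zsmult_add_right: "zsmult k (x + y) = zsmult k x + zsmult k y"
  by (rule int_repr[of k]) (simp add: zs_repr nsm_add_right)

lemma zsmult_diff_right: "zsmult k (x - y) = zsmult k x - zsmult k y"
  by (rule int_repr[of k]) (simp add: zs_repr nsm_diff)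

lemma zsmult_zero_right[simp]: "zsmult k 0 = 0"
  using zsmult_add_right[of k 0 0] by simp

lemma zsmult_add_left: "zsmult (k + l) x = zsmult k x + zsmult l x"
proof -
  obtain m n where k: "k = int m - int n" by (rule int_repr)
  obtain p q where l: "l = int p - int q" by (rule int_repr)
  have kl: "k + l = int (m + p) - int (n + q)" unfolding k l by simp
  have "zsmult (k + l) x = nsm (m + p) x - nsm (n + q) x" by (simp only: kl zs_repr)
  also have "\<dots> = zsmult k x + zsmult l x"
    unfolding k l zs_repr nsm_add_left by (simp add: algebra_simps)
  finally show ?thesis .
qed

lemma zsmult_zero_left[simp]: "zsmult 0 x = 0"
  using zsmult_add_left[of 0 0 x] by simp

lemma abel4: "(A::'a::ab_group_add) + D - (B + C) = A - B - (C - D)"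
  by (simp add: algebra_simps)

lemma zsmult_mult: "zsmult (k * l) x = zsmult k (zsmult l x)"
proof -
  obtain m n where k: "k = int m - int n" by (rule int_repr)
  obtain p q where l: "l = int p - int q" by (rule int_repr)
  have "k * l = int m * int p + int n * int q - (int m * int q + int n * int p)"
    unfolding k l by (simp add: left_diff_distrib right_diff_distrib)
  also have "\<dots> = int (m*p + n*q) - int (m*q + n*p)" by simp
  finally have kl: "k * l = int (m*p + n*q) - int (m*q + n*p)" .
  have "zsmult (k * l) x = nsm (m*p + n*q) x - nsm (m*q + n*p) x" by (simp only: kl zs_repr)
  also have "\<dots> = nsm m (nsm p x) + nsm n (nsm q x) - (nsm m (nsm q x) + nsm n (nsm p x))"
    by (simp only: nsm_add_left nsm_mult)
  also have "\<dots> = nsm m (nsm p x) - nsm m (nsm q x) - (nsm n (nsm p x) - nsm n (nsm q x))"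
    by (rule abel4)
  also have "\<dots> = zsmult k (zsmult l x)"
    by (simp only: k l zs_repr nsm_diff)
  finally show ?thesis .
qed

lemma zsmult_sum_right: "zsmult k (\<Sum>i\<in>F. f i) = (\<Sum>i\<in>F. zsmult k (f i))"
  by (induction F rule: infinite_finite_induct) (simp_all add: zsmult_add_right)

lemma zsmult_sum_left: "zsmult (\<Sum>i\<in>F. c i) x = (\<Sum>i\<in>F. zsmult (c i) x)"
  by (induction F rule: infinite_finite_induct) (simp_all add: zsmult_add_left)

lemma rel_b:
  assumes "finite F"
  shows "(\<Sum>i\<in>F. zsmult (c i) (a i - z)) = (\<Sum>i\<in>F. zsmult (c i) (a i)) - zsmult (\<Sum>i\<in>F. c i) z"
  by (simp add: zsmult_diff_right sum_subtractf zsmult_sum_left)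

lemma zsmult_minus_right: "zsmult k (- y) = - zsmult k y"
  using zsmult_diff_right[of k 0 y] by simp

lemma zsmult_minus_left: "zsmult (- k) y = - zsmult k y"
  using zsmult_add_left[of k "-k" y] by (simp add: eq_neg_iff_add_eq_0 add.commute)

lemma lin_indepD:
  assumes "lin_indep_family I x" "finite F" "F \<subseteq> I" "(\<Sum>i\<in>F. zsmult (c i) (x i)) = 0" "i \<in> F"
  shows "c i = 0"
  using assms unfolding lin_indep_family_def by blast

lemma lin_indep_negE:
  assumes "\<not> lin_indep_family I x"
  obtains F c j where "finite F" "F \<subseteq> I" "(\<Sum>i\<in>F. zsmult (c i) (x i)) = 0" "j \<in> F" "c j \<noteq> 0"
  using assms unfolding lin_indep_family_def by blast

theorem lemmaA4:
  fixes a :: "nat \<Rightarrow> 'a::ab_group_add"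
  assumes "lin_indep_family {i. 1 \<le> i} (\<lambda>i. a i - a 0)"
  shows "\<exists>N. lin_indep_family {i. N < i} a"
proof (cases "lin_indep_family {i. 0 < i} a")
  case True
  then show ?thesis by blast
next
  case False
  then obtain F0 c j where F0: "finite F0" "F0 \<subseteq> {i. 0 < i}"
    "(\<Sum>i\<in>F0. zsmult (c i) (a i)) = 0" and j: "j \<in> F0" "c j \<noteq> 0"
    by (rule lin_indep_negE)
  define N where "N = Max F0"
  have jN: "j \<le> N" using F0(1) j(1) by (simp add: N_def)
  have j0: "0 < j" using F0(2) j(1) by auto
  define b where "b = (\<lambda>i. a i - a 0)"
  have "lin_indep_family {i. N < i} a"
    unfolding lin_indep_family_def
  proof (intro allI impI)
    fix F and d :: "nat \<Rightarrow> int"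
    assume F: "finite F" "F \<subseteq> {i. N < i}" "(\<Sum>i\<in>F. zsmult (d i) (a i)) = 0"
    define s where "s = (\<Sum>i\<in>F0. c i)"
    define t where "t = (\<Sum>i\<in>F. d i)"
    have hB0: "(\<Sum>i\<in>F0. zsmult (c i) (b i)) = - zsmult s (a 0)"
      using rel_b[OF F0(1), where c=c and a=a and z="a 0"] F0(3) by (simp add: b_def s_def)
    have hB: "(\<Sum>i\<in>F. zsmult (d i) (b i)) = - zsmult t (a 0)"
      using rel_b[OF F(1), where c=d and a=a and z="a 0"] F(3) by (simp add: b_def t_def)
    have disj: "F0 \<inter> F = {}"
    proof -
      have "\<And>i. i \<in> F0 \<Longrightarrow> i \<le> N" using F0(1) by (simp add: N_def)
      then show ?thesis using F(2) by force
    qed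
    define e where "e = (\<lambda>i. if i \<in> F0 then t * c i else - s * d i)"
    have "(\<Sum>i\<in>F0 \<union> F. zsmult (e i) (b i))
        = (\<Sum>i\<in>F0. zsmult (e i) (b i)) + (\<Sum>i\<in>F. zsmult (e i) (b i))"
      by (rule sum.union_disjoint[OF F0(1) F(1) disj])
    also have "(\<Sum>i\<in>F0. zsmult (e i) (b i)) = (\<Sum>i\<in>F0. zsmult (t * c i) (b i))"
      by (rule sum.cong) (auto simp: e_def)
    also have "\<dots> = zsmult t (\<Sum>i\<in>F0. zsmult (c i) (b i))"
      by (simp add: zsmult_sum_right zsmult_mult)
    also have "(\<Sum>i\<in>F. zsmult (e i) (b i)) = (\<Sum>i\<in>F. zsmult (- s * d i) (b i))"
      by (rule sum.cong) (use disj in \<open>auto simp: e_def\<close>)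
    also have "\<dots> = zsmult (- s) (\<Sum>i\<in>F. zsmult (d i) (b i))"
      by (simp add: zsmult_sum_right flip: zsmult_mult)
    also have "zsmult t (\<Sum>i\<in>F0. zsmult (c i) (b i)) + zsmult (- s) (\<Sum>i\<in>F. zsmult (d i) (b i)) = 0"
    proof -
      have "zsmult t (- zsmult s (a 0)) = - zsmult (t * s) (a 0)"
        by (simp add: zsmult_minus_right zsmult_mult)
      moreover have "zsmult (- s) (- zsmult t (a 0)) = zsmult (s * t) (a 0)"
        by (simp add: zsmult_minus_right zsmult_minus_left zsmult_mult)
      ultimately show ?thesis unfolding hB0 hB by (simp add: mult.commute)
    qed
    finally have rel: "(\<Sum>i\<in>F0 \<union> F. zsmult (e i) (b i)) = 0" .
    have FN: "F \<subseteq> {i. 1 \<le> i}" using F(2) jN j0 by auto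
    have "\<forall>i\<in>F0 \<union> F. e i = 0"
    proof -
      have "F0 \<union> F \<subseteq> {i. 1 \<le> i}" using F0(2) FN by auto
      then show ?thesis using lin_indepD[OF assms _ _ rel[unfolded b_def]] F0(1) F(1) by blast
    qed
    then have "e j = 0" using j by blast
    then have "t * c j = 0" using j by (simp add: e_def)
    then have "t = 0" using j by simp
    then have "(\<Sum>i\<in>F. zsmult (d i) (b i)) = 0" using hB by simp
    then show "\<forall>i\<in>F. d i = 0"
      using lin_indepD[OF assms F(1) FN] unfolding b_def by blast
  qed
  then show ?thesis by blast
qed

end
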